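(* Let $\mathcal M=\{M^{(\lambda)}:\lambda\in\mathbb R_{>0}\}$ be a quasianalytic weight matrix. Then there exists a quasianalytic weight sequence $L$ such that $M^{(\lambda)}\vartriangleleft L$ for all $\lambda\in\mathbb R_{>0}$; in particular $\mathcal E_{\{\mathcal M\}}(U)\subseteq\mathcal E_{(L)}(U)$ for every non-empty open $U\subseteq\mathbb R^r$.
   Context: For a sequence $M=(M_p)_{p\in\mathbb N}$ of positive reals write $m_p:=M_p/p!$. $M$ is a weight sequence if $1=M_0\le M_1$, $M_p^2\le M_{p-1}M_{p+1}$ for all $p\ge1$, and $\liminf_{p\to\infty}m_p^{1/p}>0$; it is quasianalytic if $\sum_{p\ge1}M_{p-1}/M_p=+\infty$. A weight matrix is a family $\mathcal M=\{M^{(\lambda)}:\lambda\in\mathbb R_{>0}\}$ of weight sequences with $M^{(\lambda)}_p\le M^{(\kappa)}_p$ for all $p$ whenever $\lambda\le\kappa$; it is quasianalytic if every $M^{(\lambda)}$ is quasianalytic. For sequences $M,N$: $M\vartriangleleft N$ means $\lim_{p\to\infty}(M_p/N_p)^{1/p}=0$. For $U\subseteq\mathbb R^r$ open, $K\subseteq U$ compact, $h>0$: $\|f\|^M_{K,h}:=\sup_{\alpha\in\mathbb N^r,x\in K}|\partial^\alpha f(x)|/(h^{|\alpha|}M_{|\alpha|})$. $\mathcal E_{(L)}(U)$ consists of smooth $f$ with $\|f\|^L_{K,h}<\infty$ for all compact $K\subseteq U$ and all $h>0$. $\mathcal E_{\{\mathcal M\}}(U)$ consists of smooth $f$ such that for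 every compact $K\subseteq U$ there exist $\lambda>0$ and $h>0$ with $\|f\|^{M^{(\lambda)}}_{K,h}<\infty$. *)

theory Defs
  imports "HOL-Analysis.Analysis"
begin

definition weight_seq :: "(nat \<Rightarrow> real) \<Rightarrow> bool" where
  "weight_seq M \<longleftrightarrow>
     (\<forall>p. 0 < M p) \<and> M 0 = 1 \<and> M 0 \<le> M 1 \<and>
     (\<forall>p\<ge>1. (M p)\<^sup>2 \<le> M (p - 1) * M (p + 1)) \<and>
     0 < liminf (\<lambda>p. ereal (root p (M p / fact p)))"

text \<open>Quasianalyticity: sum over p >= 1 of M(p-1)/M(p) diverges (positive terms).\<close>
definition quasianalytic_seq :: "(nat \<Rightarrow> real) \<Rightarrow> bool" where
  "quasianalytic_seq M \<longleftrightarrow> \<not> summable (\<lambda>p. M p / M (Suc p))"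

definition weight_matrix :: "(real \<Rightarrow> nat \<Rightarrow> real) \<Rightarrow> bool" where
  "weight_matrix \<M> \<longleftrightarrow>
     (\<forall>l>0. weight_seq (\<M> l)) \<and>
     (\<forall>l k. 0 < l \<and> l \<le> k \<longrightarrow> (\<forall>p. \<M> l p \<le> \<M> k p))"

definition quasianalytic_matrix :: "(real \<Rightarrow> nat \<Rightarrow> real) \<Rightarrow> bool" where
  "quasianalytic_matrix \<M> \<longleftrightarrow> (\<forall>l>0. quasianalytic_seq (\<M> l))"

definition seq_tri :: "(nat \<Rightarrow> real) \<Rightarrow> (nat \<Rightarrow> real) \<Rightarrow> bool" where
  "seq_tri M N \<longleftrightarrow> (\<lambda>p. root p (M p / N p)) \<longlonglongrightarrow> 0"

definition partial_dir :: "'n::finite \<Rightarrow> (real^'n \<Rightarrow> real) \<Rightarrow> real^'n \<Rightarrow> real" where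
  "partial_dir i f x = deriv (\<lambda>t. f (x + t *\<^sub>R axis i 1)) 0"

fun partials :: "'n::finite list \<Rightarrow> (real^'n \<Rightarrow> real) \<Rightarrow> real^'n \<Rightarrow> real" where
  "partials [] f = f"
| "partials (i # is) f = partial_dir i (partials is f)"

definition smooth_on :: "(real^'n::finite) set \<Rightarrow> (real^'n \<Rightarrow> real) \<Rightarrow> bool" where
  "smooth_on U f \<longleftrightarrow>
     (\<forall>ds. continuous_on U (partials ds f) \<and>
        (\<forall>i. \<forall>x\<in>U. (\<lambda>t. partials ds f (x + t *\<^sub>R axis i 1)) differentiable (at 0)))"

definition coord_list :: "'n::finite list" where
  "coord_list = (SOME xs. distinct xs \<and> set xs = UNIV)"

definition mpartial :: "('n::finite \<Rightarrow> nat) \<Rightarrow> (real^'n \<Rightarrow> real) \<Rightarrow> real^'n \<Rightarrow> real" where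
  "mpartial \<alpha> f = partials (concat (map (\<lambda>i. replicate (\<alpha> i) i) coord_list)) f"

definition mi_order :: "('n::finite \<Rightarrow> nat) \<Rightarrow> nat" where
  "mi_order \<alpha> = (\<Sum>i\<in>UNIV. \<alpha> i)"

definition seminorm_finite ::
  "(nat \<Rightarrow> real) \<Rightarrow> (real^'n::finite) set \<Rightarrow> real \<Rightarrow> (real^'n \<Rightarrow> real) \<Rightarrow> bool" where
  "seminorm_finite M K h f \<longleftrightarrow>
     (\<exists>C. \<forall>\<alpha>::'n \<Rightarrow> nat. \<forall>x\<in>K.
        \<bar>mpartial \<alpha> f x\<bar> / (h ^ mi_order \<alpha> * M (mi_order \<alpha>)) \<le> C)"

definition E_beurling :: "(nat \<Rightarrow> real) \<Rightarrow> (real^'n::finite) set \<Rightarrow> (real^'n \<Rightarrow> real) set" where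
  "E_beurling L U = {f. smooth_on U f \<and>
     (\<forall>K. compact K \<and> K \<subseteq> U \<longrightarrow> (\<forall>h>0. seminorm_finite L K h f))}"

definition E_roumieu :: "(real \<Rightarrow> nat \<Rightarrow> real) \<Rightarrow> (real^'n::finite) set \<Rightarrow> (real^'n \<Rightarrow> real) set" where
  "E_roumieu \<M> U = {f. smooth_on U f \<and>
     (\<forall>K. compact K \<and> K \<subseteq> U \<longrightarrow> (\<exists>l>0. \<exists>h>0. seminorm_finite (\<M> l) K h f))}"

end

theory Submission
  imports Defs
begin


lemma fact_lower: "(real p / 3) ^ p \<le> fact p"
proof (induction p)
  case 0 then show ?case by simp
next
  case (Suc p)
  have key: "(real p + 1) ^ p \<le> 3 * real p ^ p"
  proof (cases "p = 0")
    case True then show ?thesis by simp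
  next
    case False
    then have pp: "real p > 0" by simp
    have "(1 + 1 / real p) ^ p \<le> exp (1 / real p) ^ p"
      by (rule power_mono) (use exp_ge_add_one_self[of "1/real p"] pp in auto)
    also have "\<dots> = exp 1" using pp by (simp add: exp_of_nat_mult[symmetric])
    also have "\<dots> \<le> 3" using exp_le by simp
    finally have "(1 + 1 / real p) ^ p \<le> 3" .
    moreover have "(1 + 1 / real p) ^ p = (real p + 1) ^ p / real p ^ p"
      using pp by (simp add: field_simps power_divide)
    ultimately show ?thesis using pp by (simp add: divide_le_eq)
  qed
  have "(real (Suc p) / 3) ^ Suc p = (real p + 1) ^ p * (real p + 1) / 3 ^ Suc p"
    by (simp add: power_divide field_simps)
  also have "\<dots> \<le> 3 * real p ^ p * (real p + 1) / 3 ^ Suc p"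
    by (intro divide_right_mono mult_right_mono key) auto
  also have "\<dots> = (real p / 3) ^ p * (real p + 1)"
    by (simp add: power_divide field_simps)
  also have "\<dots> \<le> fact p * (real p + 1)"
    by (intro mult_right_mono Suc.IH) auto
  also have "\<dots> = fact (Suc p)" by (simp add: algebra_simps)
  finally show ?case .
qed

lemma carleman_step:
  fixes a :: "nat \<Rightarrow> real"
  assumes pos: "\<And>j. 0 < a j" and p: "p \<ge> 1"
  shows "root p (\<Prod>j\<in>{1..p}. a j) \<le> 3 / (real p)^2 * (\<Sum>j\<in>{1..p}. real j * a j)"
proof -
  have pp: "real p > 0" using p by simp
  have Ppos: "(\<Prod>j\<in>{1..p}. a j) > 0" using pos by (simp add: prod_pos)
  have am: "(\<Prod>j\<in>{1..p}. real j * a j) powr (1 / real p) \<le> (\<Sum>j\<in>{1..p}. real j * a j / real p)"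
  proof -
    have "\<And>i. 0 \<le> real i * a i" using pos by (simp add: less_imp_le)
    then show ?thesis using arith_geom_mean[of "{1..p}" "\<lambda>j. real j * a j"] p by simp
  qed
  have prodeq: "(\<Prod>j\<in>{1..p}. real j * a j) = fact p * (\<Prod>j\<in>{1..p}. a j)"
    by (simp add: prod.distrib fact_prod)
  have fl: "fact p powr (1 / real p) \<ge> real p / 3"
  proof -
    have "(real p / 3) = ((real p / 3) ^ p) powr (1 / real p)"
      using pp by (simp add: powr_realpow[symmetric] powr_powr)
    also have "\<dots> \<le> fact p powr (1 / real p)"
      using pp fact_lower[of p] by (intro powr_mono2) auto
    finally show ?thesis .
  qed
  have fm: "(\<Prod>j\<in>{1..p}. real j * a j) powr (1 / real p)
      = fact p powr (1 / real p) * root p (\<Prod>j\<in>{1..p}. a j)"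
    unfolding prodeq using Ppos p by (subst powr_mult) (auto simp: root_powr_inverse)
  have "real p / 3 * root p (\<Prod>j\<in>{1..p}. a j) \<le> (\<Sum>j\<in>{1..p}. real j * a j / real p)"
  proof -
    have G0: "root p (\<Prod>j\<in>{1..p}. a j) \<ge> 0" using Ppos by (simp add: real_root_ge_zero less_imp_le)
    have "real p / 3 * root p (\<Prod>j\<in>{1..p}. a j) \<le> fact p powr (1 / real p) * root p (\<Prod>j\<in>{1..p}. a j)"
      by (rule mult_right_mono[OF fl G0])
    then show ?thesis using am fm by simp
  qed
  also have "\<dots> = (\<Sum>j\<in>{1..p}. real j * a j) / real p" by (simp add: sum_divide_distrib)
  finally show ?thesis using pp by (simp add: field_simps power2_eq_square)
qed

lemma carleman_sum:
  fixes a :: "nat \<Rightarrow> real"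
  assumes pos: "\<And>j. 0 < a j"
  shows "(\<Sum>p\<in>{1..P}. (\<Sum>j\<in>{1..p}. real j * a j) / (real p)^2)
          + 2 * (\<Sum>j\<in>{1..P}. real j * a j) / (2 * real P + 1) \<le> 2 * (\<Sum>j\<in>{1..P}. a j)"
proof (induction P)
  case 0 then show ?case by simp
next
  case (Suc P)
  define T where "T = (\<Sum>j\<in>{1..P}. real j * a j)"
  have nn: "\<And>i. 0 \<le> real i * a i" using pos by (simp add: less_imp_le)
  have T0: "T \<ge> 0" unfolding T_def using nn by (simp add: sum_nonneg)
  have TS: "(\<Sum>j\<in>{1..Suc P}. real j * a j) = T + (real P + 1) * a (Suc P)"
    unfolding T_def by simp
  have TS0: "T + (real P + 1) * a (Suc P) \<ge> 0" using T0 pos[of "Suc P"] by simp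
  have frac: "1 / (real P + 1)^2 + 2 / (2 * real P + 3) \<le> 2 / (2 * real P + 1)"
  proof -
    have d: "2 / (2 * real P + 1) - 2 / (2 * real P + 3) = 4 / ((2 * real P + 1) * (2 * real P + 3))"
      by (simp add: field_simps)
    have "1 / (real P + 1)^2 \<le> 4 / ((2 * real P + 1) * (2 * real P + 3))"
    proof -
      have e: "1 / (real P + 1)^2 = 4 / (4 * (real P + 1)^2)" by simp
      have a1: "(2 * real P + 1) * (2 * real P + 3) \<le> 4 * (real P + 1)^2"
        by (simp add: power2_eq_square algebra_simps)
      have a2: "0 < 4 * (real P + 1)^2 * ((2 * real P + 1) * (2 * real P + 3))"
        by (intro mult_pos_pos) auto
      show ?thesis unfolding e
        by (rule divide_left_mono[OF a1 _ a2]) simp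
    qed
    then show ?thesis using d by linarith
  qed
  have "(T + (real P + 1) * a (Suc P)) / (real (Suc P))^2
        + 2 * (T + (real P + 1) * a (Suc P)) / (2 * real (Suc P) + 1)
      = (T + (real P + 1) * a (Suc P)) * (1 / (real P + 1)^2 + 2 / (2 * real P + 3))"
    by (simp add: field_simps)
  also have "\<dots> \<le> (T + (real P + 1) * a (Suc P)) * (2 / (2 * real P + 1))"
    by (rule mult_left_mono[OF frac TS0])
  also have "\<dots> = 2 * T / (2 * real P + 1) + 2 * (real P + 1) / (2 * real P + 1) * a (Suc P)"
    by (simp add: ring_distribs add_divide_distrib mult_ac)
  also have "\<dots> \<le> 2 * T / (2 * real P + 1) + 2 * a (Suc P)"
    using pos[of "Suc P"] by (intro add_left_mono mult_right_mono) (auto simp: field_simps)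
  finally have st: "(T + (real P + 1) * a (Suc P)) / (real (Suc P))^2
        + 2 * (T + (real P + 1) * a (Suc P)) / (2 * real (Suc P) + 1)
        \<le> 2 * T / (2 * real P + 1) + 2 * a (Suc P)" .
  have e1: "(\<Sum>p\<in>{1..Suc P}. (\<Sum>j\<in>{1..p}. real j * a j) / (real p)^2)
     = (\<Sum>p\<in>{1..P}. (\<Sum>j\<in>{1..p}. real j * a j) / (real p)^2) + (T + (real P + 1) * a (Suc P)) / (real (Suc P))^2"
    using TS by simp
  have e2: "(\<Sum>j\<in>{1..Suc P}. a j) = (\<Sum>j\<in>{1..P}. a j) + a (Suc P)" by simp
  have ih: "(\<Sum>p\<in>{1..P}. (\<Sum>j\<in>{1..p}. real j * a j) / (real p)^2) + 2 * T / (2 * real P + 1)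
      \<le> 2 * (\<Sum>j\<in>{1..P}. a j)" using Suc.IH unfolding T_def .
  show ?case unfolding e1 e2 TS using ih st by (simp only: distrib_left)
qed

lemma carleman:
  fixes a :: "nat \<Rightarrow> real"
  assumes pos: "\<And>j. 0 < a j"
  shows "(\<Sum>p\<in>{1..P}. root p (\<Prod>j\<in>{1..p}. a j)) \<le> 6 * (\<Sum>j\<in>{1..P}. a j)"
proof -
  have "(\<Sum>p\<in>{1..P}. root p (\<Prod>j\<in>{1..p}. a j))
      \<le> (\<Sum>p\<in>{1..P}. 3 * ((\<Sum>j\<in>{1..p}. real j * a j) / (real p)^2))"
    by (intro sum_mono) (use carleman_step[of a, OF pos] in auto)
  also have "\<dots> = 3 * (\<Sum>p\<in>{1..P}. (\<Sum>j\<in>{1..p}. real j * a j) / (real p)^2)"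
    by (simp add: sum_distrib_left)
  also have "\<dots> \<le> 3 * (2 * (\<Sum>j\<in>{1..P}. a j))"
  proof -
    have "2 * (\<Sum>j\<in>{1..P}. real j * a j) / (2 * real P + 1) \<ge> 0"
    proof -
      have "\<And>i. 0 \<le> real i * a i" using pos by (simp add: less_imp_le)
      then have "0 \<le> (\<Sum>j\<in>{1..P}. real j * a j)" by (simp add: sum_nonneg)
      then show ?thesis by simp
    qed
    then show ?thesis using carleman_sum[of a P, OF pos] by linarith
  qed
  finally show ?thesis by simp
qed



lemma ws_pos: "weight_seq M \<Longrightarrow> 0 < M p"
  unfolding weight_seq_def by auto

lemma ws_0: "weight_seq M \<Longrightarrow> M 0 = 1"
  unfolding weight_seq_def by auto

lemma ws_quot_mono:
  assumes "weight_seq M"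
  shows "M (Suc p) / M p \<le> M (Suc (Suc p)) / M (Suc p)"
proof -
  have lc: "(M (Suc p))\<^sup>2 \<le> M p * M (Suc (Suc p))"
    using assms unfolding weight_seq_def
    by (metis add.commute add_2_eq_Suc diff_Suc_1 le_add1 plus_1_eq_Suc)
  have "0 < M p" "0 < M (Suc p)" using ws_pos[OF assms] by auto
  then show ?thesis using lc by (simp add: field_simps power2_eq_square)
qed

lemma ws_quot_mono':
  assumes "weight_seq M" "p \<le> q"
  shows "M (Suc p) / M p \<le> M (Suc q) / M q"
  using assms(2)
proof (induction q)
  case 0 then show ?case by simp
next
  case (Suc q)
  show ?case
  proof (cases "p = Suc q")
    case True then show ?thesis by simp
  next
    case False then have "p \<le> q" using Suc.prems by simp
    then show ?thesis using Suc.IH ws_quot_mono[OF assms(1), of q] by linarith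
  qed
qed

lemma ws_quot_ge1:
  assumes "weight_seq M"
  shows "1 \<le> M (Suc p) / M p"
proof -
  have "M 0 \<le> M 1" "M 0 = 1" using assms unfolding weight_seq_def by auto
  then have "1 \<le> M (Suc 0) / M 0" by simp
  then show ?thesis using ws_quot_mono'[OF assms, of 0 p] by linarith
qed

lemma ws_step: assumes "weight_seq M" shows "M p \<le> M (Suc p)"
proof -
  have "0 < M p" using ws_pos[OF assms] .
  then show ?thesis using ws_quot_ge1[OF assms, of p] by (simp add: field_simps)
qed

lemma ws_mono: assumes "weight_seq M" "p \<le> q" shows "M p \<le> M q"
  using assms(2) by (induction q) (auto intro: order_trans[OF _ ws_step[OF assms(1)]] simp: le_Suc_eq)

lemma ws_ge1: assumes "weight_seq M" shows "1 \<le> M p"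
  using ws_mono[OF assms, of 0 p] ws_0[OF assms] by simp

lemma ws_le_quot_pow:
  assumes "weight_seq M"
  shows "M p \<le> (M (Suc p) / M p) ^ p"
proof (induction p)
  case 0 then show ?case using ws_0[OF assms] by simp
next
  case (Suc p)
  have pos: "0 < M p" using ws_pos[OF assms] .
  have q1: "0 \<le> M (Suc p) / M p" using ws_pos[OF assms, of p] ws_pos[OF assms, of "Suc p"] by simp
  have "M (Suc p) = M p * (M (Suc p) / M p)" using pos by simp
  also have "\<dots> \<le> (M (Suc p) / M p) ^ p * (M (Suc p) / M p)"
    by (rule mult_right_mono[OF Suc.IH q1])
  also have "\<dots> \<le> (M (Suc (Suc p)) / M (Suc p)) ^ p * (M (Suc (Suc p)) / M (Suc p))"
    using ws_quot_mono[OF assms, of p] q1 by (intro mult_mono power_mono) auto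
  also have "\<dots> = (M (Suc (Suc p)) / M (Suc p)) ^ Suc p" by simp
  finally show ?case .
qed

lemma ws_inv_root:
  assumes "weight_seq M" "p \<ge> 1"
  shows "M p / M (Suc p) \<le> 1 / root p (M p)"
proof -
  have pos: "0 < M p" "0 < M (Suc p)" using ws_pos[OF assms(1)] by auto
  have "root p (M p) \<le> root p ((M (Suc p) / M p) ^ p)"
    using assms ws_le_quot_pow[OF assms(1), of p] by (intro real_root_le_mono) auto
  also have "\<dots> = M (Suc p) / M p" using assms pos by (simp add: real_root_power_cancel)
  finally have "root p (M p) \<le> M (Suc p) / M p" .
  moreover have "0 < root p (M p)" using pos assms by simp
  ultimately have "1 / (M (Suc p) / M p) \<le> 1 / root p (M p)"
    using pos by (intro divide_left_mono) auto
  then show ?thesis using pos by simp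
qed

lemma tails_unbounded:
  fixes f :: "nat \<Rightarrow> real"
  assumes nn: "\<And>n. 0 \<le> f n" and ns: "\<not> summable f"
  shows "\<exists>n>m. C \<le> (\<Sum>p\<in>{m..<n}. f p)"
proof (rule ccontr)
  assume "\<not> ?thesis"
  then have lt: "\<And>n. n > m \<Longrightarrow> (\<Sum>p\<in>{m..<n}. f p) < C" by (meson not_le)
  have "(\<Sum>i<n. f i) \<le> (\<Sum>i<m. f i) + \<bar>C\<bar>" for n
  proof (cases "n > m")
    case True
    have "(\<Sum>i<n. f i) = (\<Sum>i<m. f i) + (\<Sum>p\<in>{m..<n}. f p)"
      using True sum.atLeastLessThan_concat[of 0 m n f] by (simp add: atLeast0LessThan)
    then show ?thesis using lt[OF True] by linarith
  next
    case False
    then have "(\<Sum>i<n. f i) \<le> (\<Sum>i<m. f i)"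
      using nn by (intro sum_mono2) auto
    then show ?thesis by linarith
  qed
  then have "summable f" by (rule summableI_nonneg_bounded[OF nn])
  then show False using ns by simp
qed

lemma qa_blocks:
  assumes ws: "weight_seq M" and qa: "quasianalytic_seq M" and c: "c > 0"
  shows "\<exists>n>m. 1 \<le> (\<Sum>p\<in>{m..<n}. 1 / (c * root p (M p)))"
proof -
  define m' where "m' = max m 1"
  have nn: "0 \<le> M n / M (Suc n)" for n using ws_pos[OF ws, of n] ws_pos[OF ws, of "Suc n"] by simp
  obtain n where n: "n > m'" "c \<le> (\<Sum>p\<in>{m'..<n}. M p / M (Suc p))"
    using tails_unbounded[where f="\<lambda>p. M p / M (Suc p)" and m=m' and C=c, OF nn] qa unfolding quasianalytic_seq_def by blast
  have "(\<Sum>p\<in>{m'..<n}. M p / M (Suc p)) \<le> (\<Sum>p\<in>{m'..<n}. 1 / root p (M p))"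
    using ws_inv_root[OF ws] by (intro sum_mono) (auto simp: m'_def)
  also have "\<dots> \<le> (\<Sum>p\<in>{m..<n}. 1 / root p (M p))"
  proof (rule sum_mono2)
    show "\<And>b. b \<in> {m..<n} - {m'..<n} \<Longrightarrow> 0 \<le> 1 / root b (M b)"
      using ws_pos[OF ws] by (simp add: less_imp_le real_root_ge_zero)
  qed (auto simp: m'_def)
  finally have "c \<le> (\<Sum>p\<in>{m..<n}. 1 / root p (M p))" using n by linarith
  then have "1 \<le> (\<Sum>p\<in>{m..<n}. 1 / root p (M p)) / c" using c by simp
  also have "\<dots> = (\<Sum>p\<in>{m..<n}. 1 / (c * root p (M p)))"
    by (simp add: sum_divide_distrib mult.commute)
  finally show ?thesis using n m'_def by (intro exI[of _ n]) auto
qed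



lemma prod_telescope:
  fixes L :: "nat \<Rightarrow> real"
  assumes pos: "\<And>p. 0 < L p"
  shows "(\<Prod>j\<in>{1..p}. L (j - 1) / L j) = L 0 / L p"
proof (induction p)
  case 0 then show ?case using pos[of 0] by simp
next
  case (Suc p)
  have "(\<Prod>j\<in>{1..Suc p}. L (j - 1) / L j) = (\<Prod>j\<in>{1..p}. L (j - 1) / L j) * (L p / L (Suc p))"
    by simp
  also have "\<dots> = L 0 / L (Suc p)" using Suc.IH pos[of p] by simp
  finally show ?case .
qed

lemma construction:
  fixes N :: "nat \<Rightarrow> nat \<Rightarrow> real"
  assumes ws: "\<And>k. weight_seq (N k)"
    and mono: "\<And>j k p. j \<le> k \<Longrightarrow> N j p \<le> N k p"
    and qa: "\<And>k. quasianalytic_seq (N k)"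
  shows "\<exists>L. weight_seq L \<and> quasianalytic_seq L \<and> (\<forall>k. \<exists>D>0. \<forall>p. real (Suc k) ^ p * N k p \<le> D * L p)"
proof -
  have Npos: "\<And>k p. 0 < N k p" using ws_pos[OF ws] .
  have Nge1: "\<And>k p. 1 \<le> N k p" using ws_ge1[OF ws] .
  have N0: "\<And>k. N k 0 = 1" using ws_0[OF ws] .
  have Nmono: "\<And>k p q. p \<le> q \<Longrightarrow> N k p \<le> N k q" using ws_mono[OF ws] .
  have "\<forall>k m. \<exists>n>m. 1 \<le> (\<Sum>p\<in>{m..<n}. 1 / (real (Suc k) * root p (N k p)))"
    using qa_blocks[OF ws qa] by simp
  then obtain g where g: "\<And>k m. m < g k m" "\<And>k m. 1 \<le> (\<Sum>p\<in>{m..<g k m}. 1 / (real (Suc k) * root p (N k p)))"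
    by metis
  define P where "P = rec_nat 0 g"
  have P0: "P 0 = 0" and PS: "\<And>k. P (Suc k) = g k (P k)" unfolding P_def by auto
  have Pstep: "\<And>k. P k < P (Suc k)" using g(1) PS by simp
  have Psm: "strict_mono P" using Pstep strict_mono_Suc_iff by blast
  have Pge: "\<And>k. k \<le> P k" using strict_mono_imp_increasing[OF Psm] .
  have Pblock: "\<And>k. 1 \<le> (\<Sum>p\<in>{P k..<P (Suc k)}. 1 / (real (Suc k) * root p (N k p)))"
    using g(2) PS by simp
  define d where "d k = real (Suc k) ^ P k * N k (P k)" for k
  have pow1: "\<And>k p. 1 \<le> real (Suc k) ^ p" by simp
  have prod1: "\<And>k p q. 1 \<le> real (Suc k) ^ p * N k q"
    using mult_mono[OF pow1 Nge1] by simp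
  have d1: "\<And>k. 1 \<le> d k" unfolding d_def by (rule prod1)
  have d0: "d 0 = 1" unfolding d_def using P0 N0 by simp
  define A where "A k p = real (Suc k) ^ p * N k p / d k" for k p
  have Apos: "\<And>k p. 0 < A k p" unfolding A_def using prod1 d1
    by (meson divide_pos_pos less_le_trans zero_less_one)
  have A0: "\<And>p. A 0 p = N 0 p" unfolding A_def using d0 by simp
  have Asmall: "A k p \<le> 1" if "p \<le> P k" for k p
  proof -
    have "real (Suc k) ^ p * N k p \<le> real (Suc k) ^ P k * N k (P k)"
      using that Nmono[OF that, of k] Npos by (intro mult_mono power_increasing) (auto intro: less_imp_le)
    then show ?thesis unfolding A_def d_def using d1[of k] unfolding d_def by simp
  qed
  have Abig: "A k p \<le> real (Suc k) ^ p * N k p" for k p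
  proof -
    have "0 \<le> real (Suc k) ^ p * N k p" using Npos[of k p] by simp
    then have "real (Suc k) ^ p * N k p / d k \<le> real (Suc k) ^ p * N k p / 1"
      using d1[of k] by (intro divide_left_mono) auto
    then show ?thesis unfolding A_def by simp
  qed
  define L where "L p = Max ((\<lambda>k. A k p) ` {..p})" for p
  have Lin: "\<exists>k\<le>p. L p = A k p" for p
  proof -
    have "L p \<in> (\<lambda>k. A k p) ` {..p}" unfolding L_def by (intro Max_in) auto
    then show ?thesis by auto
  qed
  have Lge: "A k p \<le> L p" for k p
  proof (cases "k \<le> p")
    case True then show ?thesis unfolding L_def by (intro Max_ge) auto
  next
    case False
    then have "p \<le> P k" using Pge[of k] by linarith
    then have "A k p \<le> 1" by (rule Asmall)
    also have "1 \<le> A 0 p" using A0 Nge1 by simp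
    also have "A 0 p \<le> L p" unfolding L_def by (intro Max_ge) auto
    finally show ?thesis .
  qed
  have Lpos: "0 < L p" for p using Lge[of 0 p] Apos[of 0 p] by linarith
  have Lup: "L p \<le> real (Suc k) ^ p * N k p" if "p < P (Suc k)" for p k
  proof -
    obtain j where j: "j \<le> p" "L p = A j p" using Lin by blast
    show ?thesis
    proof (cases "j \<le> k")
      case True
      have "A j p \<le> real (Suc j) ^ p * N j p" by (rule Abig)
      also have "\<dots> \<le> real (Suc k) ^ p * N k p"
        using True mono[OF True, of p] Npos by (intro mult_mono power_mono) (auto intro: less_imp_le)
      finally show ?thesis using j by simp
    next
      case False
      then have "Suc k \<le> j" by simp
      then have "P (Suc k) \<le> P j" using Psm by (simp add: strict_mono_less_eq)
      then have "A j p \<le> 1" using that by (intro Asmall) simp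
      also have "1 \<le> real (Suc k) ^ p * N k p" by (rule prod1)
      finally show ?thesis using j by simp
    qed
  qed
  have L0: "L 0 = 1" unfolding L_def using A0 N0 by simp
  have L1: "1 \<le> L 1" using Lge[of 0 1] A0 Nge1[of 0 1] by simp
  have Llc: "(L p)\<^sup>2 \<le> L (p - 1) * L (p + 1)" if "p \<ge> 1" for p
  proof -
    obtain j where j: "L p = A j p" using Lin by blast
    have lc: "(N j p)\<^sup>2 \<le> N j (p - 1) * N j (p + 1)"
      using ws[of j] that unfolding weight_seq_def by auto
    have "(A j p)\<^sup>2 = (real (Suc j) ^ p)\<^sup>2 * (N j p)\<^sup>2 / (d j)\<^sup>2"
      unfolding A_def by (simp add: power2_eq_square)
    also have "\<dots> \<le> (real (Suc j) ^ p)\<^sup>2 * (N j (p - 1) * N j (p + 1)) / (d j)\<^sup>2"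
      using lc by (intro divide_right_mono mult_left_mono) auto
    also have "\<dots> = A j (p - 1) * A j (p + 1)"
    proof -
      have "(real (Suc j) ^ p)\<^sup>2 = real (Suc j) ^ (p - 1) * real (Suc j) ^ (p + 1)"
      proof -
        have e: "(p - 1) + (p + 1) = p + p" using that by simp
        show ?thesis by (simp only: power2_eq_square power_add[symmetric] e)
      qed
      then show ?thesis unfolding A_def by (simp add: power2_eq_square)
    qed
    also have "\<dots> \<le> L (p - 1) * L (p + 1)"
      using Lge Apos Lpos by (intro mult_mono) (auto intro: less_imp_le)
    finally show ?thesis using j by simp
  qed
  have Lliminf: "0 < liminf (\<lambda>p. ereal (root p (L p / fact p)))"
  proof -
    have "0 < liminf (\<lambda>p. ereal (root p (N 0 p / fact p)))"
      using ws[of 0] unfolding weight_seq_def by auto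
    also have "\<dots> \<le> liminf (\<lambda>p. ereal (root p (L p / fact p)))"
    proof (rule Liminf_mono, rule always_eventually, rule allI)
      fix p
      show "ereal (root p (N 0 p / fact p)) \<le> ereal (root p (L p / fact p))"
      proof (cases "p = 0")
        case True then show ?thesis by simp
      next
        case False
        have "N 0 p \<le> L p" using Lge[of 0 p] A0 by simp
        then have "N 0 p / fact p \<le> L p / fact p" by (intro divide_right_mono) auto
        then show ?thesis using False by (simp add: real_root_le_mono)
      qed
    qed
    finally show ?thesis .
  qed
  have wsL: "weight_seq L"
    unfolding weight_seq_def using Lpos L0 L1 Llc Lliminf by auto
  have blockL: "1 \<le> (\<Sum>p\<in>{P k..<P (Suc k)}. 1 / root p (L p))" for k
  proof -
    have "(\<Sum>p\<in>{P k..<P (Suc k)}. 1 / (real (Suc k) * root p (N k p))) \<le> (\<Sum>p\<in>{P k..<P (Suc k)}. 1 / root p (L p))"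
    proof (rule sum_mono)
      fix p assume p: "p \<in> {P k..<P (Suc k)}"
      show "1 / (real (Suc k) * root p (N k p)) \<le> 1 / root p (L p)"
      proof (cases "p = 0")
        case True then show ?thesis by simp
      next
        case False
        have "root p (L p) \<le> root p (real (Suc k) ^ p * N k p)"
          using Lup[of p k] p False by (intro real_root_le_mono) auto
        also have "\<dots> = real (Suc k) * root p (N k p)"
          using False by (simp add: real_root_mult real_root_power_cancel)
        finally have le: "root p (L p) \<le> real (Suc k) * root p (N k p)" .
        have "0 < root p (L p)" using Lpos[of p] False by simp
        then show ?thesis using le by (intro divide_left_mono) auto
      qed
    qed
    then show ?thesis using Pblock[of k] by linarith
  qed
  have sumL: "real K \<le> (\<Sum>p\<in>{0..<P K}. 1 / root p (L p))" for K
  proof (induction K)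
    case 0 then show ?case using P0 by simp
  next
    case (Suc K)
    have "(\<Sum>p\<in>{0..<P (Suc K)}. 1 / root p (L p)) = (\<Sum>p\<in>{0..<P K}. 1 / root p (L p)) + (\<Sum>p\<in>{P K..<P (Suc K)}. 1 / root p (L p))"
      using sum.atLeastLessThan_concat[of 0 "P K" "P (Suc K)" "\<lambda>p. 1 / root p (L p)"] Pstep[of K] by simp
    then show ?case using Suc.IH blockL[of K] by simp
  qed
  have qaL: "quasianalytic_seq L"
    unfolding quasianalytic_seq_def
  proof
    assume sm: "summable (\<lambda>p. L p / L (Suc p))"
    define a where "a j = L (j - 1) / L j" for j
    have apos: "\<And>j. 0 < a j" unfolding a_def using Lpos by simp
    have bound: "(\<Sum>p\<in>{0..<n}. 1 / root p (L p)) \<le> 6 * suminf (\<lambda>p. L p / L (Suc p))" for n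
    proof -
      have "(\<Sum>p\<in>{0..<n}. 1 / root p (L p)) \<le> (\<Sum>p\<in>{1..n}. 1 / root p (L p))"
      proof -
        have "(\<Sum>p\<in>{0..<n}. 1 / root p (L p)) = (\<Sum>p\<in>{1..<n}. 1 / root p (L p))"
        proof (cases n)
          case (Suc m)
          then show ?thesis using sum.atLeast_Suc_lessThan[of 0 n "\<lambda>p. 1 / root p (L p)"] by simp
        qed simp
        also have "\<dots> \<le> (\<Sum>p\<in>{1..n}. 1 / root p (L p))"
          using Lpos by (intro sum_mono2) (auto simp: less_imp_le real_root_ge_zero)
        finally show ?thesis .
      qed
      also have "\<dots> = (\<Sum>p\<in>{1..n}. root p (\<Prod>j\<in>{1..p}. a j))"
      proof (rule sum.cong)
        fix p assume pin: "p \<in> {1..n}"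
        have "(\<Prod>j\<in>{1..p}. a j) = 1 / L p"
          unfolding a_def using prod_telescope[of L p] Lpos L0 by simp
        then show "1 / root p (L p) = root p (\<Prod>j\<in>{1..p}. a j)"
          using pin by (simp add: real_root_divide)
      qed simp
      also have "\<dots> \<le> 6 * (\<Sum>j\<in>{1..n}. a j)" using carleman[of a n] apos by blast
      also have "(\<Sum>j\<in>{1..n}. a j) = (\<Sum>i<n. L i / L (Suc i))"
        unfolding a_def using sum.atLeast1_atMost_eq[of "\<lambda>j. L (j - 1) / L j" n] by simp
      also have "\<dots> \<le> suminf (\<lambda>p. L p / L (Suc p))"
        using sm Lpos by (intro sum_le_suminf) (auto intro: less_imp_le)
      finally show ?thesis by simp
    qed
    define K where "K = nat \<lceil>6 * suminf (\<lambda>p. L p / L (Suc p))\<rceil> + 1"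
    have "real K \<le> 6 * suminf (\<lambda>p. L p / L (Suc p))"
      using sumL[of K] bound[of "P K"] by linarith
    moreover have "real K > 6 * suminf (\<lambda>p. L p / L (Suc p))"
      unfolding K_def by linarith
    ultimately show False by linarith
  qed
  have dom: "\<forall>k. \<exists>D>0. \<forall>p. real (Suc k) ^ p * N k p \<le> D * L p"
  proof
    fix k
    have "real (Suc k) ^ p * N k p \<le> d k * L p" for p
    proof -
      have "real (Suc k) ^ p * N k p = d k * A k p" unfolding A_def using d1[of k] by simp
      also have "\<dots> \<le> d k * L p" using Lge d1[of k] by (intro mult_left_mono) auto
      finally show ?thesis .
    qed
    then show "\<exists>D>0. \<forall>p. real (Suc k) ^ p * N k p \<le> D * L p" using d1[of k]
      by (intro exI[of _ "d k"]) auto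
  qed
  show ?thesis using wsL qaL dom by blast
qed



lemma tri_lemma:
  fixes M L :: "nat \<Rightarrow> real" and N :: "nat \<Rightarrow> nat \<Rightarrow> real"
  assumes Mpos: "\<And>p. 0 < M p" and Lpos: "\<And>p. 0 < L p"
    and le: "\<And>p. M p \<le> N n p"
    and dom: "\<forall>k. \<exists>D>0. \<forall>p. real (Suc k) ^ p * N k p \<le> D * L p"
    and mono: "\<And>j k p. j \<le> k \<Longrightarrow> N j p \<le> N k p"
  shows "seq_tri M L"
  unfolding seq_tri_def lim_sequentially
proof (intro allI impI)
  fix r :: real assume r: "r > 0"
  define k where "k = n + nat \<lceil>2 / r\<rceil>"
  have kr: "2 / r < real (Suc k)" unfolding k_def by linarith
  have kr': "2 / real (Suc k) < r" using kr r by (simp add: field_simps)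
  obtain D where D: "D > 0" "\<And>p. real (Suc k) ^ p * N k p \<le> D * L p" using dom by blast
  obtain no where no: "\<And>p. p \<ge> no \<Longrightarrow> dist (root p D) 1 < 1"
    using LIMSEQ_root_const[OF D(1)] unfolding lim_sequentially by (meson zero_less_one)
  show "\<exists>no. \<forall>p\<ge>no. dist (root p (M p / L p)) 0 < r"
  proof (intro exI[of _ "max no 1"] allI impI)
    fix p assume p: "max no 1 \<le> p"
    then have p1: "p > 0" by simp
    have rD: "root p D < 2" using no[of p] p by (simp add: dist_real_def)
    have "M p \<le> N k p" using le[of p] mono[of n k p] unfolding k_def by simp
    then have "real (Suc k) ^ p * M p \<le> D * L p"
      using D(2)[of p] by (meson order_trans mult_left_mono zero_le_power of_nat_0_le_iff)
    then have "M p / L p \<le> D / real (Suc k) ^ p"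
      using Lpos[of p] by (simp add: field_simps)
    then have "root p (M p / L p) \<le> root p (D / real (Suc k) ^ p)"
      using p1 by (rule real_root_le_mono[rotated])
    also have "\<dots> = root p D / real (Suc k)"
      using p1 by (simp add: real_root_divide real_root_power_cancel)
    also have "\<dots> \<le> 2 / real (Suc k)" using rD by (simp add: divide_right_mono)
    finally have "root p (M p / L p) < r" using kr' by linarith
    moreover have "0 \<le> root p (M p / L p)"
      using Mpos[of p] Lpos[of p] by (simp add: real_root_ge_zero less_imp_le)
    ultimately show "dist (root p (M p / L p)) 0 < r" by (simp add: dist_real_def)
  qed
qed

lemma bounded_ratio:
  fixes M L :: "nat \<Rightarrow> real"
  assumes tri: "seq_tri M L" and Mpos: "\<And>p. 0 < M p" and Lpos: "\<And>p. 0 < L p"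
    and h: "h > 0" and h': "h' > 0"
  shows "\<exists>B\<ge>0. \<forall>q. h ^ q * M q / (h' ^ q * L q) \<le> B"
proof -
  obtain Q where Q: "\<And>q. q \<ge> Q \<Longrightarrow> dist (root q (M q / L q)) 0 < h' / h"
    using tri h h' unfolding seq_tri_def lim_sequentially by (meson divide_pos_pos)
  define f where "f q = h ^ q * M q / (h' ^ q * L q)" for q
  define B where "B = Max (insert 1 (f ` {..<max Q 1}))"
  have B1: "1 \<le> B" unfolding B_def by (intro Max_ge) auto
  have "f q \<le> B" for q
  proof (cases "q < max Q 1")
    case True then show ?thesis unfolding B_def by (intro Max_ge) auto
  next
    case False
    then have q: "q \<ge> Q" "q > 0" by auto
    have x0: "0 \<le> M q / L q" using Mpos[of q] Lpos[of q] by (simp add: less_imp_le)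
    have r0: "0 \<le> root q (M q / L q)" using x0 by (simp add: real_root_ge_zero)
    have rl: "root q (M q / L q) \<le> h' / h" using Q[OF q(1)] r0 by (simp add: dist_real_def)
    have base: "h / h' * root q (M q / L q) \<le> 1"
      using rl h h' by (simp add: field_simps)
    have "f q = (h / h' * root q (M q / L q)) ^ q"
      using q(2) x0 by (simp add: f_def power_mult_distrib power_divide)
    also have "\<dots> \<le> 1" using base r0 h h' by (intro power_le_one) auto
    finally show ?thesis using B1 by linarith
  qed
  then show ?thesis using B1 unfolding f_def by (intro exI[of _ B]) auto
qed

theorem mainTheorem9:
  fixes \<M> :: "real \<Rightarrow> nat \<Rightarrow> real"
  assumes "weight_matrix \<M>" and "quasianalytic_matrix \<M>"
  shows "\<exists>L. weight_seq L \<and> quasianalytic_seq L \<and> (\<forall>l>0. seq_tri (\<M> l) L) \<and>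
           (\<forall>U :: (real^'n::finite) set. open U \<and> U \<noteq> {} \<longrightarrow> E_roumieu \<M> U \<subseteq> E_beurling L U)"
proof -
  define N where "N k = \<M> (real (Suc k))" for k
  have wsM: "\<And>l. l > 0 \<Longrightarrow> weight_seq (\<M> l)" using assms(1) unfolding weight_matrix_def by auto
  have monoM: "\<And>l k p. 0 < l \<Longrightarrow> l \<le> k \<Longrightarrow> \<M> l p \<le> \<M> k p"
    using assms(1) unfolding weight_matrix_def by blast
  have ws: "\<And>k. weight_seq (N k)" unfolding N_def by (rule wsM) simp
  have mono: "\<And>j k p. j \<le> k \<Longrightarrow> N j p \<le> N k p" unfolding N_def by (rule monoM) auto
  have qa: "\<And>k. quasianalytic_seq (N k)"
    using assms(2) unfolding quasianalytic_matrix_def N_def by simp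
  obtain L where L: "weight_seq L" "quasianalytic_seq L"
    and dom: "\<forall>k. \<exists>D>0. \<forall>p. real (Suc k) ^ p * N k p \<le> D * L p"
    using construction[where N=N, OF ws mono qa] by blast
  have Lpos: "\<And>p. 0 < L p" using ws_pos[OF L(1)] .
  have tri: "seq_tri (\<M> l) L" if l: "l > 0" for l
  proof (rule tri_lemma[where N=N and n="nat \<lceil>l\<rceil>", OF _ Lpos _ dom mono])
    show "\<And>p. 0 < \<M> l p" using ws_pos[OF wsM[OF l]] .
    show "\<And>p. \<M> l p \<le> N (nat \<lceil>l\<rceil>) p" unfolding N_def using l
      by (intro monoM) (auto, linarith)
  qed
  have incl: "E_roumieu \<M> U \<subseteq> E_beurling L U" for U :: "(real^'n) set"
  proof
    fix f assume f: "f \<in> E_roumieu \<M> U"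
    show "f \<in> E_beurling L U"
      unfolding E_beurling_def
    proof (intro CollectI conjI allI impI)
      show "smooth_on U f" using f unfolding E_roumieu_def by simp
      fix K :: "(real^'n) set" and h' :: real
      assume K: "compact K \<and> K \<subseteq> U" and h': "h' > 0"
      obtain l h where lh: "l > 0" "h > 0" "seminorm_finite (\<M> l) K h f"
        using f K unfolding E_roumieu_def by blast
      obtain C where C: "\<And>\<alpha> x. x \<in> K \<Longrightarrow>
          \<bar>mpartial \<alpha> f x\<bar> / (h ^ mi_order \<alpha> * \<M> l (mi_order \<alpha>)) \<le> C"
        using lh(3) unfolding seminorm_finite_def by blast
      have Mpos: "\<And>p. 0 < \<M> l p" using ws_pos[OF wsM[OF lh(1)]] .
      obtain B where B: "B \<ge> 0" "\<And>q. h ^ q * \<M> l q / (h' ^ q * L q) \<le> B"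
        using bounded_ratio[where M="\<M> l" and L=L, OF tri[OF lh(1)] Mpos Lpos lh(2) h'] by blast
      show "seminorm_finite L K h' f"
        unfolding seminorm_finite_def
      proof (intro exI[of _ "max C 0 * B"] allI ballI)
        fix \<alpha> :: "'n \<Rightarrow> nat" and x assume x: "x \<in> K"
        define q where "q = mi_order \<alpha>"
        define v where "v = \<bar>mpartial \<alpha> f x\<bar>"
        have hq: "0 < h ^ q * \<M> l q" using lh(2) Mpos by simp
        have hq': "0 < h' ^ q * L q" using h' Lpos by simp
        have e: "v / (h' ^ q * L q) = v / (h ^ q * \<M> l q) * (h ^ q * \<M> l q / (h' ^ q * L q))"
        proof -
          have gen: "\<And>a b. a > 0 \<Longrightarrow> b > 0 \<Longrightarrow> v / b = v / a * (a / b)" by simp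
          show ?thesis using gen[OF hq hq'] .
        qed
        have v0: "0 \<le> v" unfolding v_def by simp
        have "v / (h ^ q * \<M> l q) \<le> max C 0" using C[OF x, of \<alpha>] unfolding v_def q_def by simp
        moreover have "0 \<le> h ^ q * \<M> l q / (h' ^ q * L q)" using hq hq' by simp
        ultimately have fin: "v / (h ^ q * \<M> l q) * (h ^ q * \<M> l q / (h' ^ q * L q)) \<le> max C 0 * B"
          using B(2)[of q] by (intro mult_mono) auto
        show "\<bar>mpartial \<alpha> f x\<bar> / (h' ^ mi_order \<alpha> * L (mi_order \<alpha>)) \<le> max C 0 * B"
          unfolding v_def[symmetric] q_def[symmetric] e by (rule fin)
      qed
    qed
  qed
  show ?thesis using L tri incl by blast
qed


end
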